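(* Let $A_1,A_2$ be unital, properly infinite $C^*$-algebras, let $B$ be a $C^*$-algebra and let $\pi_1\colon A_1\to B$, $\pi_2\colon A_2\to B$ be surjective $*$-homomorphisms. Let $A=\{(a_1,a_2)\in A_1\oplus A_2:\pi_1(a_1)=\pi_2(a_2)\}$ be the pull-back. Then $M_2(A)$ is properly infinite. Moreover, if $B$ is $K_1$-injective, then $A$ itself is properly infinite.
   Context: A unital $C^*$-algebra is properly infinite if its unit is a properly infinite projection, i.e. there are mutually orthogonal projections $e,f\le 1$ with $e\sim 1\sim f$ (Murray–von Neumann equivalence). A unital $C^*$-algebra $B$ is $K_1$-injective if the natural map $\mathcal U(B)/\mathcal U^0(B)\to K_1(B)$ is injective, where $\mathcal U(B)$ is the unitary group and $\mathcal U^0(B)$ its connected component containing $1$. *)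

theory Defs
  imports "HOL-Analysis.Analysis"
begin

text \<open>The real Banach algebra structure is
inherited from the library classes; the complex scalar multiplication extends it.\<close>

class cstar_algebra = real_normed_algebra + banach +
  fixes scaleC :: "complex \<Rightarrow> 'a \<Rightarrow> 'a"
    and cadj :: "'a \<Rightarrow> 'a"
  assumes scaleC_add_right: "scaleC c (x + y) = scaleC c x + scaleC c y"
    and scaleC_add_left: "scaleC (c + d) x = scaleC c x + scaleC d x"
    and scaleC_scaleC: "scaleC c (scaleC d x) = scaleC (c * d) x"
    and scaleC_one: "scaleC 1 x = x"
    and scaleR_scaleC: "scaleR r x = scaleC (complex_of_real r) x"
    and scaleC_mult_left: "scaleC c x * y = scaleC c (x * y)"
    and scaleC_mult_right: "x * scaleC c y = scaleC c (x * y)"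
    and norm_scaleC: "norm (scaleC c x) = cmod c * norm x"
    and cadj_cadj: "cadj (cadj x) = x"
    and cadj_add: "cadj (x + y) = cadj x + cadj y"
    and cadj_scaleC: "cadj (scaleC c x) = scaleC (cnj c) (cadj x)"
    and cadj_mult: "cadj (x * y) = cadj y * cadj x"
    and cstar_identity: "norm (cadj x * x) = norm x * norm x"

text \<open>Unital C*-algebras (the zero algebra, where 1 = 0, is not excluded).\<close>
class unital_cstar_algebra = cstar_algebra + monoid_mult

definition star_hom :: "('a::cstar_algebra \<Rightarrow> 'b::cstar_algebra) \<Rightarrow> bool" where
  "star_hom \<pi> \<longleftrightarrow>
     (\<forall>x y. \<pi> (x + y) = \<pi> x + \<pi> y) \<and>
     (\<forall>c x. \<pi> (scaleC c x) = scaleC c (\<pi> x)) \<and>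
     (\<forall>x y. \<pi> (x * y) = \<pi> x * \<pi> y) \<and>
     (\<forall>x. \<pi> (cadj x) = cadj (\<pi> x))"

text \<open>Stated for a unital *-algebra given explicitly by a carrier S, multiplication m,
adjoint ad, zero z and unit u (so that it applies to subalgebras such as the pull-back
and to matrix algebras over them).\<close>

definition is_proj :: "('a \<Rightarrow> 'a \<Rightarrow> 'a) \<Rightarrow> ('a \<Rightarrow> 'a) \<Rightarrow> 'a \<Rightarrow> bool" where
  "is_proj m ad p \<longleftrightarrow> m p p = p \<and> ad p = p"

definition mvn_equiv :: "'a set \<Rightarrow> ('a \<Rightarrow> 'a \<Rightarrow> 'a) \<Rightarrow> ('a \<Rightarrow> 'a) \<Rightarrow> 'a \<Rightarrow> 'a \<Rightarrow> bool" where
  "mvn_equiv S m ad p q \<longleftrightarrow> (\<exists>v\<in>S. m (ad v) v = p \<and> m v (ad v) = q)"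

text \<open>Properly infinite unit: mutually orthogonal projections e, f \<le> 1 with e ~ 1 ~ f.
(Every projection is \<le> 1; orthogonality e f = 0 implies f e = 0 by taking adjoints.)\<close>
definition properly_infinite ::
  "'a set \<Rightarrow> ('a \<Rightarrow> 'a \<Rightarrow> 'a) \<Rightarrow> ('a \<Rightarrow> 'a) \<Rightarrow> 'a \<Rightarrow> 'a \<Rightarrow> bool" where
  "properly_infinite S m ad z u \<longleftrightarrow>
     (\<exists>e\<in>S. \<exists>f\<in>S. is_proj m ad e \<and> is_proj m ad f \<and> m e f = z \<and>
        mvn_equiv S m ad e u \<and> mvn_equiv S m ad f u)"

definition pullback :: "('a \<Rightarrow> 'c) \<Rightarrow> ('b \<Rightarrow> 'c) \<Rightarrow> ('a \<times> 'b) set" where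
  "pullback \<pi>1 \<pi>2 = {(a1, a2). \<pi>1 a1 = \<pi>2 a2}"

definition pmult :: "('a::times \<times> 'b::times) \<Rightarrow> ('a \<times> 'b) \<Rightarrow> ('a \<times> 'b)" where
  "pmult x y = (fst x * fst y, snd x * snd y)"

definition padd :: "('a::plus \<times> 'b::plus) \<Rightarrow> ('a \<times> 'b) \<Rightarrow> ('a \<times> 'b)" where
  "padd x y = (fst x + fst y, snd x + snd y)"

definition padj :: "('a::cstar_algebra \<times> 'b::cstar_algebra) \<Rightarrow> ('a \<times> 'b)" where
  "padj x = (cadj (fst x), cadj (snd x))"

text \<open>2x2 matrices over an algebra (ops p, m, ad, z, u), entries indexed by bool.\<close>

definition mat2_carrier :: "'a set \<Rightarrow> (bool \<Rightarrow> bool \<Rightarrow> 'a) set" where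
  "mat2_carrier S = {M. \<forall>i j. M i j \<in> S}"

definition mat2_mult :: "('a \<Rightarrow> 'a \<Rightarrow> 'a) \<Rightarrow> ('a \<Rightarrow> 'a \<Rightarrow> 'a) \<Rightarrow>
    (bool \<Rightarrow> bool \<Rightarrow> 'a) \<Rightarrow> (bool \<Rightarrow> bool \<Rightarrow> 'a) \<Rightarrow> (bool \<Rightarrow> bool \<Rightarrow> 'a)" where
  "mat2_mult p m M N = (\<lambda>i j. p (m (M i False) (N False j)) (m (M i True) (N True j)))"

definition mat2_adj :: "('a \<Rightarrow> 'a) \<Rightarrow> (bool \<Rightarrow> bool \<Rightarrow> 'a) \<Rightarrow> (bool \<Rightarrow> bool \<Rightarrow> 'a)" where
  "mat2_adj ad M = (\<lambda>i j. ad (M j i))"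

definition mat2_const :: "'a \<Rightarrow> (bool \<Rightarrow> bool \<Rightarrow> 'a)" where
  "mat2_const z = (\<lambda>i j. z)"

definition mat2_one :: "'a \<Rightarrow> 'a \<Rightarrow> (bool \<Rightarrow> bool \<Rightarrow> 'a)" where
  "mat2_one z u = (\<lambda>i j. if i = j then u else z)"

definition is_unit_elem :: "'a::times \<Rightarrow> bool" where
  "is_unit_elem e \<longleftrightarrow> (\<forall>x. e * x = x \<and> x * e = x)"

text \<open>n x n matrices over B (unit e) as functions nat => nat => B; only entries i,j < n matter.\<close>

definition matn_mult :: "nat \<Rightarrow> (nat \<Rightarrow> nat \<Rightarrow> 'a::cstar_algebra) \<Rightarrow> (nat \<Rightarrow> nat \<Rightarrow> 'a) \<Rightarrow> (nat \<Rightarrow> nat \<Rightarrow> 'a)" where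
  "matn_mult n M N = (\<lambda>i j. \<Sum>k<n. M i k * N k j)"

definition matn_adj :: "(nat \<Rightarrow> nat \<Rightarrow> 'a::cstar_algebra) \<Rightarrow> (nat \<Rightarrow> nat \<Rightarrow> 'a)" where
  "matn_adj M = (\<lambda>i j. cadj (M j i))"

definition matn_id :: "'a::cstar_algebra \<Rightarrow> (nat \<Rightarrow> nat \<Rightarrow> 'a)" where
  "matn_id e = (\<lambda>i j. if i = j then e else 0)"

definition matn_eq :: "nat \<Rightarrow> (nat \<Rightarrow> nat \<Rightarrow> 'a) \<Rightarrow> (nat \<Rightarrow> nat \<Rightarrow> 'a) \<Rightarrow> bool" where
  "matn_eq n M N \<longleftrightarrow> (\<forall>i<n. \<forall>j<n. M i j = N i j)"

definition matn_unitary :: "'a::cstar_algebra \<Rightarrow> nat \<Rightarrow> (nat \<Rightarrow> nat \<Rightarrow> 'a) \<Rightarrow> bool" where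
  "matn_unitary e n U \<longleftrightarrow>
     matn_eq n (matn_mult n (matn_adj U) U) (matn_id e) \<and>
     matn_eq n (matn_mult n U (matn_adj U)) (matn_id e)"

text \<open>U lies in the connected component of the identity of the unitary group of
M_n(B), i.e. it is joined to 1 by a continuous path of unitaries (the topology of M_n(B)
is that of entrywise convergence).\<close>
definition matn_in_U0 :: "'a::cstar_algebra \<Rightarrow> nat \<Rightarrow> (nat \<Rightarrow> nat \<Rightarrow> 'a) \<Rightarrow> bool" where
  "matn_in_U0 e n U \<longleftrightarrow>
     (\<exists>\<gamma> :: real \<Rightarrow> nat \<Rightarrow> nat \<Rightarrow> 'a.
        (\<forall>i<n. \<forall>j<n. continuous_on {0..1} (\<lambda>t. \<gamma> t i j)) \<and>
        (\<forall>t\<in>{0..1}. matn_unitary e n (\<gamma> t)) \<and>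
        matn_eq n (\<gamma> 0) U \<and> matn_eq n (\<gamma> 1) (matn_id e))"

definition diag_one :: "'a::cstar_algebra \<Rightarrow> 'a \<Rightarrow> (nat \<Rightarrow> nat \<Rightarrow> 'a)" where
  "diag_one e u = (\<lambda>i j. if i = 0 \<and> j = 0 then u else if i = j then e else 0)"

text \<open>B (unital with unit e) is K_1-injective: a unitary u whose class [u] in K_1(B)
vanishes (i.e. diag(u,1_k) is in U^0(M_{k+1}(B)) for some k) lies in U^0(B).  Since
U(B)/U^0(B) -> K_1(B) is a group homomorphism, this is injectivity of that map.\<close>
definition K1_injective :: "'a::cstar_algebra itself \<Rightarrow> bool" where
  "K1_injective _ \<longleftrightarrow> (\<exists>e::'a. is_unit_elem e \<and>
     (\<forall>u::'a. cadj u * u = e \<and> u * cadj u = e \<longrightarrow>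
        (\<exists>k. matn_in_U0 e (Suc k) (diag_one e u)) \<longrightarrow>
        matn_in_U0 e 1 (\<lambda>i j. u)))"

end

theory Submission
  imports Defs
begin

context cstar_algebra begin

lemma cadj_zero[simp]: "cadj 0 = 0"
proof -
  have "cadj (0 + 0) = cadj 0 + cadj 0" by (rule cadj_add)
  thus ?thesis by simp
qed

lemma cadj_minus[simp]: "cadj (- x) = - cadj x"
proof -
  have "cadj (x + - x) = cadj x + cadj (- x)" by (rule cadj_add)
  thus ?thesis by (simp add: eq_neg_iff_add_eq_0 add.commute)
qed

lemma cadj_diff[simp]: "cadj (x - y) = cadj x - cadj y"
  using cadj_add[of x "- y"] by simp

lemma cadj_scaleR[simp]: "cadj (scaleR r x) = scaleR r (cadj x)"
  by (simp add: scaleR_scaleC cadj_scaleC)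

lemma cadj_sum: "cadj (sum f A) = sum (\<lambda>i. cadj (f i)) A"
  by (induction A rule: infinite_finite_induct) (auto simp: cadj_add)

lemma cadj_inj: "cadj x = cadj y \<longleftrightarrow> x = y"
  by (metis cadj_cadj)

lemma cadj_eq_0[simp]: "cadj x = 0 \<longleftrightarrow> x = 0"
  by (metis cadj_cadj cadj_zero)

lemma norm_cadj_le: "norm x \<le> norm (cadj x)"
proof (cases "x = 0")
  case True thus ?thesis by simp
next
  case False
  have "norm x * norm x = norm (cadj x * x)" by (simp add: cstar_identity)
  also have "\<dots> \<le> norm (cadj x) * norm x" by (rule norm_mult_ineq)
  finally show ?thesis using False by simp
qed

lemma norm_cadj[simp]: "norm (cadj x) = norm x"
  using norm_cadj_le[of x] norm_cadj_le[of "cadj x"] by (simp add: cadj_cadj)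


lemma scaleC_zero_right[simp]: "scaleC c 0 = 0"
  using scaleC_add_right[of c 0 0] by simp

lemma scaleC_zero_left[simp]: "scaleC 0 x = 0"
  using scaleC_add_left[of 0 0 x] by simp

lemma scaleC_minus_right: "scaleC c (- x) = - scaleC c x"
  using scaleC_add_right[of c x "- x"] by (simp add: eq_neg_iff_add_eq_0 add.commute)

lemma scaleC_diff_right: "scaleC c (x - y) = scaleC c x - scaleC c y"
  using scaleC_add_right[of c x "- y"] by (simp add: scaleC_minus_right)

lemma scaleC_minus_left: "scaleC (- c) x = - scaleC c x"
  using scaleC_add_left[of c "- c" x] by (simp add: eq_neg_iff_add_eq_0 add.commute)

lemma scaleC_of_real: "scaleC (complex_of_real r) x = scaleR r x"
  by (simp add: scaleR_scaleC)

end

lemma bounded_linear_cadj: "bounded_linear (cadj :: 'a::cstar_algebra \<Rightarrow> 'a)"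
  by (rule bounded_linear_intro[where K=1]) (auto simp: cadj_add)

lemma unit_cadj:
  fixes u :: "'a::cstar_algebra"
  assumes "is_unit_elem u" shows "cadj u = u"
proof -
  have "is_unit_elem (cadj u)"
    unfolding is_unit_elem_def
  proof
    fix x
    have "cadj u * x = cadj (cadj x * u)" by (simp add: cadj_mult cadj_cadj)
    also have "\<dots> = x" using assms by (simp add: is_unit_elem_def cadj_cadj)
    finally have 1: "cadj u * x = x" .
    have "x * cadj u = cadj (u * cadj x)" by (simp add: cadj_mult cadj_cadj)
    also have "\<dots> = x" using assms by (simp add: is_unit_elem_def cadj_cadj)
    finally show "cadj u * x = x \<and> x * cadj u = x" using 1 by simp
  qed
  then have "u * cadj u = u" "u * cadj u = cadj u" using assms unfolding is_unit_elem_def by metis+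
  thus ?thesis by simp
qed

lemma unit_norm_le:
  fixes u :: "'a::cstar_algebra"
  assumes "is_unit_elem u" shows "norm u \<le> 1"
proof -
  have "norm u * norm u = norm (cadj u * u)" by (simp add: cstar_identity)
  also have "\<dots> = norm u" using assms by (simp add: unit_cadj is_unit_elem_def)
  finally have "norm u * norm u = norm u" .
  hence "norm u = 0 \<or> norm u = 1"
    by (metis mult_cancel_right1 mult_zero_left)
  thus ?thesis by auto
qed

lemma unit_unique:
  fixes u v :: "'a::cstar_algebra"
  assumes "is_unit_elem u" "is_unit_elem v" shows "u = v"
  using assms unfolding is_unit_elem_def by metis

fun pw :: "'a::cstar_algebra \<Rightarrow> 'a \<Rightarrow> nat \<Rightarrow> 'a" where
  "pw a u 0 = u"
| "pw a u (Suc n) = a * pw a u n"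

lemma pw_comm:
  assumes "is_unit_elem u" shows "pw a u n * a = a * pw a u n"
proof (induction n)
  case 0 thus ?case using assms by (simp add: is_unit_elem_def)
next
  case (Suc n)
  have "pw a u (Suc n) * a = a * (pw a u n * a)" by (simp add: mult.assoc)
  also have "\<dots> = a * pw a u (Suc n)" using Suc by simp
  finally show ?case .
qed

lemma pw_norm:
  assumes "is_unit_elem u" shows "norm (pw a u n) \<le> norm a ^ n"
proof (induction n)
  case 0 thus ?case using unit_norm_le[OF assms] by simp
next
  case (Suc n)
  have "norm (pw a u (Suc n)) \<le> norm a * norm (pw a u n)" by (simp add: norm_mult_ineq)
  also have "\<dots> \<le> norm a * norm a ^ n" using Suc by (simp add: mult_left_mono)
  finally show ?case by simp
qed

lemma neumann:
  fixes a u :: "'a::cstar_algebra"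
  assumes u: "is_unit_elem u" and a: "norm a < 1"
  shows "\<exists>b. (u - a) * b = u \<and> b * (u - a) = u"
proof -
  have sg: "summable (\<lambda>n. norm a ^ n)" using a by (simp add: summable_geometric)
  have sp: "summable (pw a u)"
    by (rule summable_comparison_test[OF _ sg]) (use pw_norm[OF u] in auto)
  have lim0: "pw a u \<longlonglongrightarrow> 0"
  proof (rule Lim_null_comparison)
    show "\<forall>\<^sub>F n in sequentially. norm (pw a u n) \<le> norm a ^ n" using pw_norm[OF u] by auto
    show "(\<lambda>n. norm a ^ n) \<longlonglongrightarrow> 0" using a by (simp add: LIMSEQ_power_zero)
  qed
  have tel: "(\<lambda>n. pw a u n - pw a u (Suc n)) sums (u - 0)"
    using telescope_sums'[OF lim0] by simp
  define b where "b = suminf (pw a u)"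
  have "(u - a) * b = (\<Sum>n. (u - a) * pw a u n)" unfolding b_def by (simp add: suminf_mult sp)
  also have "(\<lambda>n. (u - a) * pw a u n) = (\<lambda>n. pw a u n - pw a u (Suc n))"
    using u by (simp add: algebra_simps is_unit_elem_def)
  also have "suminf \<dots> = u" using tel sums_unique by fastforce
  finally have 1: "(u - a) * b = u" .
  have "b * (u - a) = (\<Sum>n. pw a u n * (u - a))" unfolding b_def by (simp add: suminf_mult2 sp)
  also have "(\<lambda>n. pw a u n * (u - a)) = (\<lambda>n. pw a u n - pw a u (Suc n))"
    using u by (simp add: algebra_simps is_unit_elem_def pw_comm)
  also have "suminf \<dots> = u" using tel sums_unique by fastforce
  finally show ?thesis using 1 by blast
qed

lemma scaleC_mult_both: "scaleC a (x::'a::cstar_algebra) * scaleC b y = scaleC (a * b) (x * y)"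
  by (simp add: scaleC_mult_left scaleC_mult_right scaleC_scaleC mult.commute)

lemma selfadj_inv:
  fixes k u :: "'a::cstar_algebra"
  assumes u: "is_unit_elem u" and k: "cadj k = k"
  shows "\<exists>b. (u - scaleC \<i> k) * b = u \<and> b * (u - scaleC \<i> k) = u"
proof -
  define t :: real where "t = norm k * norm k"
  have t0: "t \<ge> 0" unfolding t_def by simp
  define X where "X = scaleC (of_real t) u + scaleC \<i> k"
  have uu: "u * u = u" using u by (simp add: is_unit_elem_def)
  have uk: "u * k = k" "k * u = k" using u by (auto simp: is_unit_elem_def)
  have cX: "cadj X = scaleC (of_real t) u + scaleC (- \<i>) k"
    unfolding X_def by (simp add: cadj_add cadj_scaleC unit_cadj[OF u] k)
  have "cadj X * X = scaleC (of_real (t*t)) u + k * k"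
    apply (subst cX) apply (subst X_def)
    apply (simp add: distrib_left distrib_right scaleC_mult_both uu uk)
    apply (simp add: scaleC_add_left[symmetric] algebra_simps scaleC_one)
    done
  hence "norm (cadj X * X) \<le> t * t + norm k * norm k"
  proof -
    assume h: "cadj X * X = scaleC (of_real (t*t)) u + k * k"
    have "norm (cadj X * X) \<le> norm (scaleC (of_real (t*t)) u) + norm (k * k)"
      unfolding h by (rule norm_triangle_ineq)
    also have "norm (scaleC (of_real (t*t)) u) = t * t * norm u"
      using t0 by (simp add: norm_scaleC del: of_real_mult)
    also have "t * t * norm u \<le> t * t"
      using unit_norm_le[OF u] t0 by (simp add: mult_left_le)
    also have "norm (k * k) \<le> norm k * norm k" by (rule norm_mult_ineq)
    finally show ?thesis by simp
  qed
  hence nX: "norm X * norm X \<le> t * t + t" by (simp add: cstar_identity t_def)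
  have nX1: "norm X < 1 + t"
  proof (rule ccontr)
    assume "\<not> norm X < 1 + t"
    hence "(1+t)*(1+t) \<le> norm X * norm X" using t0 by (intro mult_mono) auto
    moreover have "(1+t)*(1+t) = 1 + 2*t + t*t" by (simp add: algebra_simps)
    ultimately show False using nX t0 by linarith
  qed
  define a where "a = scaleC (of_real (1/(1+t))) X"
  have na: "norm a < 1" unfolding a_def using nX1 t0 by (simp add: norm_scaleC field_simps del: of_real_divide of_real_add)
  obtain b where b: "(u - a) * b = u" "b * (u - a) = u" using neumann[OF u na] by blast
  have ne: "1 + complex_of_real t \<noteq> 0"
  proof
    assume "1 + complex_of_real t = 0"
    hence "Re (1 + complex_of_real t) = 0" by simp
    thus False using t0 by simp
  qed
  have eq: "u - scaleC \<i> k = scaleC (of_real (1+t)) (u - a)"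
  proof -
    have "scaleC (of_real (1+t)) (u - a) = scaleC (of_real (1+t)) u - X"
      unfolding a_def using t0 ne by (simp add: scaleC_diff_right scaleC_scaleC scaleC_one)
    also have "\<dots> = u - scaleC \<i> k"
      unfolding X_def by (simp add: scaleC_add_left scaleC_one algebra_simps)
    finally show ?thesis by simp
  qed
  define b' where "b' = scaleC (of_real (1/(1+t))) b"
  have "(u - scaleC \<i> k) * b' = u" "b' * (u - scaleC \<i> k) = u"
    unfolding eq b'_def using t0 b ne
    by (simp_all add: scaleC_mult_both scaleC_one)
  thus ?thesis by blast
qed

lemma unitL: "is_unit_elem e \<Longrightarrow> e * x = x" and unitR: "is_unit_elem e \<Longrightarrow> x * e = x"
  by (auto simp: is_unit_elem_def)

lemma unit_one: "is_unit_elem (1::'a::unital_cstar_algebra)"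
  by (simp add: is_unit_elem_def)

lemma cadj_one[simp]: "cadj (1::'a::unital_cstar_algebra) = 1"
  by (rule unit_cadj[OF unit_one])

lemma inv_unique:
  fixes x y y' :: "'a::cstar_algebra"
  assumes "x * y = e" "y' * x = e" "is_unit_elem e" shows "y = y'"
proof -
  have "y = e * y" using assms by (simp add: unitL)
  also have "\<dots> = (y' * x) * y" using assms(2) by simp
  also have "\<dots> = y' * (x * y)" by (simp add: mult.assoc)
  also have "\<dots> = y'" using assms(1,3) by (simp add: unitR)
  finally show ?thesis .
qed

lemma inv_comm:
  fixes x y z :: "'a::cstar_algebra"
  assumes "x * y = e" "y * x = e" "is_unit_elem e" "x * z = z * x" shows "y * z = z * y"
proof -
  have "y * z = y * z * (x * y)" using assms by (simp add: unitR)
  also have "\<dots> = y * (z * x) * y" by (simp add: mult.assoc)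
  also have "\<dots> = y * (x * z) * y" using assms by simp
  also have "\<dots> = (y * x) * z * y" by (simp add: mult.assoc)
  also have "\<dots> = z * y" using assms by (simp add: unitL)
  finally show ?thesis .
qed

locale shom =
  fixes \<pi> :: "'a::unital_cstar_algebra \<Rightarrow> 'b::cstar_algebra"
  assumes sh: "star_hom \<pi>" and su: "surj \<pi>"
begin

lemma add[simp]: "\<pi> (x + y) = \<pi> x + \<pi> y" using sh by (simp add: star_hom_def)
lemma mult[simp]: "\<pi> (x * y) = \<pi> x * \<pi> y" using sh by (simp add: star_hom_def)
lemma scC[simp]: "\<pi> (scaleC c x) = scaleC c (\<pi> x)" using sh by (simp add: star_hom_def)
lemma adj[simp]: "\<pi> (cadj x) = cadj (\<pi> x)" using sh by (simp add: star_hom_def)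
lemma zero[simp]: "\<pi> 0 = 0" using add[of 0 0] by simp
lemma minus[simp]: "\<pi> (- x) = - \<pi> x" using add[of x "- x"] by (simp add: eq_neg_iff_add_eq_0 add.commute)
lemma diff[simp]: "\<pi> (x - y) = \<pi> x - \<pi> y" using add[of x "- y"] by simp
lemma scR[simp]: "\<pi> (scaleR r x) = scaleR r (\<pi> x)" by (simp add: scaleR_scaleC)

lemma unit_img: "is_unit_elem (\<pi> 1)"
  unfolding is_unit_elem_def
proof
  fix y obtain x where "y = \<pi> x" using su by (metis surj_def)
  thus "\<pi> 1 * y = y \<and> y * \<pi> 1 = y" by (simp flip: mult)
qed

lemma lift_selfadj:
  fixes h :: 'b and P :: 'a
  assumes hs: "cadj h = h" and P: "P * P = P" "cadj P = P" and c: "\<pi> P * h = h * \<pi> P"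
  shows "\<exists>k. cadj k = k \<and> k * P = P * k \<and> \<pi> k = h"
proof -
  obtain a where a: "\<pi> a = h" using su by (metis surj_def)
  define h0 where "h0 = scaleR (1/2) (a + cadj a)"
  have h0s: "cadj h0 = h0" unfolding h0_def by (simp add: cadj_add cadj_cadj add.commute)
  have h0p: "\<pi> h0 = h" unfolding h0_def using a hs by (simp add: scaleR_add_right[symmetric] scaleR_2[symmetric])
  define k where "k = P * h0 * P + (1 - P) * h0 * (1 - P)"
  have "cadj k = k" unfolding k_def using P h0s by (simp add: cadj_add cadj_mult mult.assoc)
  moreover have "k * P = P * k"
  proof -
    have q1: "(1 - P) * P = 0" "P * (1 - P) = 0" using P by (simp_all add: left_diff_distrib right_diff_distrib)
    have "k * P = P * h0 * P" unfolding k_def using P q1 by (simp add: distrib_right mult.assoc)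
    moreover have "P * k = P * h0 * P" unfolding k_def using P q1
      by (simp add: distrib_left mult.assoc[symmetric])
    ultimately show ?thesis by simp
  qed
  moreover have "\<pi> k = h"
  proof -
    let ?p = "\<pi> P" and ?e = "\<pi> 1"
    have pp: "?p * ?p = ?p" using P by (simp flip: mult)
    have "\<pi> k = ?p * h * ?p + (?e - ?p) * h * (?e - ?p)" unfolding k_def by (simp add: h0p)
    also have "\<dots> = h * (?p * ?p) + h * ((?e - ?p) * (?e - ?p))"
      using c unit_img by (simp add: algebra_simps mult.assoc unitL unitR)
    also have "\<dots> = h" using pp unit_img by (simp add: algebra_simps unitL unitR)
    finally show ?thesis .
  qed
  ultimately show ?thesis by blast
qed

end

lemma cadj_iC: "cadj (scaleC \<i> (k::'a::cstar_algebra)) = - scaleC \<i> (cadj k)"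
  by (simp add: cadj_scaleC scaleC_minus_left)

lemma cayley:
  fixes k P :: "'a::unital_cstar_algebra"
  assumes ks: "cadj k = k" and kP: "k * P = P * k"
  shows "\<exists>V r. cadj V * V = 1 \<and> V * cadj V = 1 \<and> V * P = P * V \<and>
      V = (1 + scaleC \<i> k) * r \<and> (1 - scaleC \<i> k) * r = 1 \<and> r * (1 - scaleC \<i> k) = 1"
proof -
  define a where "a = 1 - scaleC \<i> k"
  define b where "b = 1 + scaleC \<i> k"
  obtain r where r: "a * r = 1" "r * a = 1" using selfadj_inv[OF unit_one ks] unfolding a_def by blast
  have ca: "cadj a = b" unfolding a_def b_def by (simp add: cadj_iC ks)
  have ab: "a * b = b * a" unfolding a_def b_def
    by (simp add: algebra_simps scaleC_mult_both)
  have rb: "b * cadj r = 1" "cadj r * b = 1"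
    using r ca by (metis cadj_mult cadj_one)+
  have br: "r * b = b * r" using inv_comm[OF r unit_one ab] by simp
  have rr: "cadj r * r = r * cadj r" using inv_comm[OF rb unit_one br[symmetric]] by simp
  have aP: "a * P = P * a" unfolding a_def using kP by (simp add: algebra_simps scaleC_mult_left scaleC_mult_right)
  have bP: "b * P = P * b" unfolding b_def using kP by (simp add: algebra_simps scaleC_mult_left scaleC_mult_right)
  have rP: "r * P = P * r" using inv_comm[OF r unit_one aP] .
  define V where "V = b * r"
  have cV: "cadj V = cadj r * a" unfolding V_def using ca by (metis cadj_mult cadj_cadj)
  note VV = V_def[symmetric]
  have "cadj V * V = cadj r * (a * b) * r" unfolding cV by (simp add: V_def mult.assoc)
  also have "\<dots> = (cadj r * b) * (a * r)" unfolding ab by (simp add: mult.assoc)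
  also have "\<dots> = 1" using r rb by simp
  finally have 1: "cadj V * V = 1" .
  have "V * cadj V = b * (r * cadj r) * a" unfolding cV by (simp add: V_def mult.assoc)
  also have "\<dots> = (b * cadj r) * (r * a)" unfolding rr[symmetric] by (simp add: mult.assoc)
  also have "\<dots> = 1" using r rb by simp
  finally have 2: "V * cadj V = 1" .
  have 3: "V * P = P * V" unfolding V_def
    by (metis mult.assoc rP bP)
  show ?thesis using 1 2 3 r unfolding V_def a_def b_def by blast
qed

context shom begin

lemma lift_sym:
  fixes j :: 'b and P :: 'a
  assumes js: "cadj j = j" "j * j = \<pi> 1" and P: "P * P = P" "cadj P = P" and c: "\<pi> P * j = j * \<pi> P"
  shows "\<exists>V. cadj V * V = 1 \<and> V * cadj V = 1 \<and> V * P = P * V \<and> \<pi> V = j"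
proof -
  obtain k where k: "cadj k = k" "k * P = P * k" "\<pi> k = j" using lift_selfadj[OF js(1) P c] by blast
  obtain V r where V: "cadj V * V = 1" "V * cadj V = 1" "V * P = P * V"
      "V = (1 + scaleC \<i> k) * r" "(1 - scaleC \<i> k) * r = 1"
    using cayley[OF k(1,2)] by blast
  let ?e = "\<pi> 1"
  have ue: "is_unit_elem ?e" by (rule unit_img)
  have pr: "(?e - scaleC \<i> j) * \<pi> r = ?e" using V(5) k(3) by (metis diff mult scC)
  have pV: "\<pi> V = (?e + scaleC \<i> j) * \<pi> r" using V(4) k(3) by simp
  have key: "(?e + scaleC \<i> j) = scaleC \<i> j * (?e - scaleC \<i> j)"
    using js(2) ue by (simp add: algebra_simps scaleC_mult_left scaleC_mult_right scaleC_scaleC unitL unitR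
        scaleC_minus_left scaleC_one)
  have piV: "\<pi> V = scaleC \<i> j"
    unfolding pV key by (simp add: mult.assoc pr unitR[OF ue])
  define V' where "V' = scaleC (- \<i>) V"
  have "cadj V' * V' = 1" "V' * cadj V' = 1" "V' * P = P * V'" "\<pi> V' = j"
    unfolding V'_def using V piV
    by (simp_all add: cadj_scaleC scaleC_mult_both scaleC_mult_left scaleC_mult_right scaleC_scaleC scaleC_one)
  thus ?thesis by blast
qed

end

context shom begin

lemma lift_near:
  fixes w :: 'b
  assumes wu: "cadj w * w = \<pi> 1" "w * cadj w = \<pi> 1" and wn: "norm (w - \<pi> 1) < 1"
  shows "\<exists>V. cadj V * V = 1 \<and> V * cadj V = 1 \<and> \<pi> V = w"
proof -
  let ?e = "\<pi> 1"
  have ue: "is_unit_elem ?e" by (rule unit_img)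
  note uL = unitL[OF ue] and uR = unitR[OF ue]
  define a where "a = scaleR (1/2) (?e - w)"
  have na: "norm a < 1" unfolding a_def using wn by (simp add: norm_minus_commute)
  obtain b where b: "(?e - a) * b = ?e" "b * (?e - a) = ?e" using neumann[OF ue na] by blast
  define q where "q = scaleR (1/2) b"
  have ea: "?e - a = scaleR (1/2) (?e + w)" unfolding a_def
  proof -
    have "?e = scaleR (1/2) ?e + scaleR (1/2) ?e" by (simp flip: scaleR_add_left)
    hence "?e - scaleR (1/2) (?e - w) = scaleR (1/2) ?e + scaleR (1/2) ?e - (scaleR (1/2) ?e - scaleR (1/2) w)"
      by (simp add: scaleR_diff_right)
    thus "?e - scaleR (1/2) (?e - w) = scaleR (1/2) (?e + w)" by (simp add: scaleR_add_right)
  qed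
  have q1: "(?e + w) * q = ?e" using b(1) unfolding ea q_def by (simp add: mult_scaleR_left mult_scaleR_right)
  have q2: "q * (?e + w) = ?e" using b(2) unfolding ea q_def by (simp add: mult_scaleR_left mult_scaleR_right)
  have ew: "(?e + w) * w = w * (?e + w)" by (simp add: algebra_simps uL uR)
  have wq: "q * w = w * q" using inv_comm[OF q1 q2 ue ew] .
  have ce: "cadj ?e = ?e" by (rule unit_cadj[OF ue])
  have x1: "cadj (?e + w) * (w * q) = ?e"
  proof -
    have "cadj (?e + w) * (w * q) = w * q + (cadj w * w) * q" by (simp add: cadj_add ce algebra_simps uL mult.assoc)
    also have "\<dots> = (?e + w) * q" using wu by (simp add: algebra_simps uL)
    finally show ?thesis using q1 by simp
  qed
  have x2: "cadj q * cadj (?e + w) = ?e" using q1 ce by (metis cadj_mult)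
  have cq: "cadj q = w * q" using inv_unique[OF x1 x2 ue] by simp
  define h where "h = scaleC \<i> ((?e - w) * q)"
  have hq: "(?e - w) * q = q * (?e - w)" using wq by (simp add: algebra_simps uL uR)
  have hs: "cadj h = h"
  proof -
    have "cadj h = - scaleC \<i> (cadj q * (?e - cadj w))" unfolding h_def
      by (simp add: cadj_iC cadj_mult ce)
    also have "cadj q * (?e - cadj w) = q * (w - w * cadj w)"
    proof -
      have "cadj q * (?e - cadj w) = w * q - (w * q) * cadj w" unfolding cq by (simp add: right_diff_distrib uR)
      also have "\<dots> = q * w - (q * w) * cadj w" by (simp only: wq)
      also have "\<dots> = q * (w - w * cadj w)" by (simp add: right_diff_distrib mult.assoc)
      finally show ?thesis .
    qed
    also have "\<dots> = - (q * (?e - w))" using wu by (simp add: algebra_simps)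
    finally show ?thesis unfolding h_def hq by (simp add: scaleC_minus_right)
  qed
  have c1: "\<pi> 1 * h = h * \<pi> 1" by (simp add: uL uR)
  obtain k where k: "cadj k = k" "k * 1 = 1 * k" "\<pi> k = h"
    using lift_selfadj[OF hs _ _ c1] by auto
  obtain V r where V: "cadj V * V = 1" "V * cadj V = 1"
      "V = (1 + scaleC \<i> k) * r" "(1 - scaleC \<i> k) * r = 1"
    using cayley[OF k(1,2)] by blast
  have pr: "(?e - scaleC \<i> h) * \<pi> r = ?e" using V(4) k(3) by (metis diff mult scC)
  have pV: "\<pi> V = (?e + scaleC \<i> h) * \<pi> r" using V(3) k(3) by simp
  have ih: "scaleC \<i> h = - ((?e - w) * q)" unfolding h_def by (simp add: scaleC_scaleC scaleC_minus_left scaleC_one)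
  have em: "?e - scaleC \<i> h = q + q"
  proof -
    have "?e - scaleC \<i> h = (?e + w) * q + (?e - w) * q" unfolding ih q1 by simp
    also have "\<dots> = q + q" by (simp add: algebra_simps uL)
    finally show ?thesis .
  qed
  have ep: "?e + scaleC \<i> h = w * q + w * q"
  proof -
    have "?e + scaleC \<i> h = (?e + w) * q - (?e - w) * q" unfolding ih q1 by simp
    also have "\<dots> = w * q + w * q" by (simp add: algebra_simps)
    finally show ?thesis .
  qed
  have "\<pi> V = w * (?e - scaleC \<i> h) * \<pi> r" unfolding pV ep em by (simp add: algebra_simps)
  also have "\<dots> = w" using pr by (simp add: mult.assoc uR)
  finally show ?thesis using V by blast
qed

end

lemma unitary_norm_le:
  fixes u e :: "'a::cstar_algebra"
  assumes "cadj u * u = e" "is_unit_elem e" shows "norm u \<le> 1"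
proof -
  have "norm u * norm u = norm e" using assms(1) by (metis cstar_identity)
  also have "\<dots> \<le> 1" by (rule unit_norm_le[OF assms(2)])
  finally have "norm u * norm u \<le> 1" .
  thus ?thesis by (metis mult_le_cancel_left1 norm_ge_zero not_less order.trans mult_le_one le_cases zero_le_one)
qed

context shom begin

definition liftable :: "'b \<Rightarrow> bool" where
  "liftable b \<longleftrightarrow> (\<exists>V. cadj V * V = 1 \<and> V * cadj V = 1 \<and> \<pi> V = b)"

lemma liftable_one: "liftable (\<pi> 1)" unfolding liftable_def by (rule exI[of _ 1]) simp

lemma liftable_mult: "liftable b \<Longrightarrow> liftable c \<Longrightarrow> liftable (b * c)"
  unfolding liftable_def
proof (elim exE conjE)
  fix V W assume V: "cadj V * V = 1" "V * cadj V = 1" "\<pi> V = b"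
    and W: "cadj W * W = 1" "W * cadj W = 1" "\<pi> W = c"
  have "cadj (V * W) * (V * W) = cadj W * (cadj V * V) * W" by (simp add: cadj_mult mult.assoc)
  hence 1: "cadj (V * W) * (V * W) = 1" using V W by simp
  have "(V * W) * cadj (V * W) = V * (W * cadj W) * cadj V" by (simp add: cadj_mult mult.assoc)
  hence 2: "(V * W) * cadj (V * W) = 1" using V W by simp
  show "\<exists>U. cadj U * U = 1 \<and> U * cadj U = 1 \<and> \<pi> U = b * c"
    using 1 2 V W by (intro exI[of _ "V * W"]) simp
qed

lemma path_lift:
  fixes \<gamma> :: "real \<Rightarrow> 'b"
  assumes cont: "continuous_on {0..1} \<gamma>"
    and un: "\<And>t. t \<in> {0..1} \<Longrightarrow> cadj (\<gamma> t) * \<gamma> t = \<pi> 1 \<and> \<gamma> t * cadj (\<gamma> t) = \<pi> 1"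
    and g1: "\<gamma> 1 = \<pi> 1"
  shows "liftable (\<gamma> 0)"
proof -
  let ?e = "\<pi> 1"
  have ue: "is_unit_elem ?e" by (rule unit_img)
  have "uniformly_continuous_on {0..1} \<gamma>" using compact_uniformly_continuous[OF cont] by simp
  then obtain d where d: "d > 0" "\<And>s t. s \<in> {0..1} \<Longrightarrow> t \<in> {0..1} \<Longrightarrow> dist s t < d \<Longrightarrow> dist (\<gamma> s) (\<gamma> t) < 1"
    unfolding uniformly_continuous_on_def by (metis zero_less_one)
  have step: "liftable (\<gamma> t)" if s: "s \<in> {0..1}" "t \<in> {0..1}" "\<bar>s - t\<bar> < d" "liftable (\<gamma> s)" for s t
  proof -
    define w where "w = cadj (\<gamma> s) * \<gamma> t"
    have us: "cadj (\<gamma> s) * \<gamma> s = ?e" "\<gamma> s * cadj (\<gamma> s) = ?e" using un[OF s(1)] by auto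
    have ut: "cadj (\<gamma> t) * \<gamma> t = ?e" "\<gamma> t * cadj (\<gamma> t) = ?e" using un[OF s(2)] by auto
    have wu1: "cadj w * w = ?e"
    proof -
      have "cadj w * w = cadj (\<gamma> t) * (\<gamma> s * cadj (\<gamma> s)) * \<gamma> t" unfolding w_def by (simp add: cadj_mult cadj_cadj mult.assoc)
      thus ?thesis using us ut by (simp add: unitL[OF ue] unitR[OF ue])
    qed
    have wu2: "w * cadj w = ?e"
    proof -
      have "w * cadj w = cadj (\<gamma> s) * (\<gamma> t * cadj (\<gamma> t)) * \<gamma> s" unfolding w_def by (simp add: cadj_mult cadj_cadj mult.assoc)
      thus ?thesis using us ut by (simp add: unitL[OF ue] unitR[OF ue])
    qed
    have ncs: "norm (cadj (\<gamma> s)) \<le> 1"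
      using unitary_norm_le[of "cadj (\<gamma> s)" ?e] us ue by (simp add: cadj_cadj)
    have "w - ?e = cadj (\<gamma> s) * (\<gamma> t - \<gamma> s)" unfolding w_def using us by (simp add: right_diff_distrib)
    hence "norm (w - ?e) \<le> norm (cadj (\<gamma> s)) * norm (\<gamma> t - \<gamma> s)" by (metis norm_mult_ineq)
    also have "\<dots> \<le> norm (\<gamma> t - \<gamma> s)" using ncs by (simp add: mult_left_le_one_le)
    also have "\<dots> < 1" using d(2)[OF s(2) s(1)] s(3) by (simp add: dist_norm abs_minus_commute)
    finally have "norm (w - ?e) < 1" .
    then have "liftable w" unfolding liftable_def using lift_near[OF wu1 wu2] by blast
    hence "liftable (\<gamma> s * w)" using s(4) by (rule liftable_mult[rotated])
    moreover have "\<gamma> s * w = \<gamma> t" unfolding w_def using us by (simp add: mult.assoc[symmetric] unitL[OF ue])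
    ultimately show ?thesis by simp
  qed
  have ind: "\<forall>t \<in> {0..1}. 1 - t \<le> real n * (d/2) \<longrightarrow> liftable (\<gamma> t)" for n
  proof (induction n)
    case 0
    show ?case
    proof (intro ballI impI)
      fix t :: real assume "t \<in> {0..1}" "1 - t \<le> real 0 * (d/2)"
      hence "t = 1" by auto
      thus "liftable (\<gamma> t)" using g1 liftable_one by simp
    qed
  next
    case (Suc n)
    show ?case
    proof (intro ballI impI)
      fix t :: real assume t: "t \<in> {0..1}" "1 - t \<le> real (Suc n) * (d/2)"
      define s where "s = min 1 (t + d/2)"
      have s1: "s \<in> {0..1}" using t d unfolding s_def by auto
      have "1 - s \<le> real n * (d/2)" using t d unfolding s_def by (auto simp: algebra_simps min_def)
      hence "liftable (\<gamma> s)" using Suc s1 by blast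
      moreover have "\<bar>s - t\<bar> < d" using t d unfolding s_def by auto
      ultimately show "liftable (\<gamma> t)" using step[OF s1 t(1)] by blast
    qed
  qed
  obtain n :: nat where n: "2 / d \<le> real n" using real_arch_simple by blast
  have "1 \<le> real n * (d/2)" using n d by (simp add: field_simps)
  thus ?thesis using ind[of n] by auto
qed

end

locale twoiso =
  fixes e x1 x2 :: "'b::cstar_algebra"
  assumes ue: "is_unit_elem e" and x11: "cadj x1 * x1 = e" and x22: "cadj x2 * x2 = e"
    and x12: "cadj x1 * x2 = 0"
begin

lemma eL[simp]: "e * z = z" and eR[simp]: "z * e = z" using ue by (auto simp: is_unit_elem_def)
lemma ce[simp]: "cadj e = e" by (rule unit_cadj[OF ue])

lemma x21: "cadj x2 * x1 = 0" using x12 by (metis cadj_mult cadj_cadj cadj_zero)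

lemma xs[simp]: "cadj x1 * x1 = e" "cadj x2 * x2 = e" "cadj x1 * x2 = 0" "cadj x2 * x1 = 0"
  "cadj x1 * (x1 * z) = z" "cadj x2 * (x2 * z) = z" "cadj x1 * (x2 * z) = 0" "cadj x2 * (x1 * z) = 0"
  using x11 x22 x12 x21 by (simp_all add: mult.assoc[symmetric])

definition "p = e - x1 * cadj x1 - x2 * cadj x2"

lemma ps[simp]: "cadj p = p" "p * x1 = 0" "p * x2 = 0" "cadj x1 * p = 0" "cadj x2 * p = 0"
  "p * (x1 * z) = 0" "p * (x2 * z) = 0" "cadj x1 * (p * z) = 0" "cadj x2 * (p * z) = 0"
  unfolding p_def by (simp_all add: cadj_mult cadj_cadj cadj_add algebra_simps mult.assoc)

lemma pp[simp]: "p * p = p" "p * (p * z) = p * z"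
proof -
  show 1: "p * p = p" by (subst (1) p_def) (simp add: algebra_simps mult.assoc)
  show "p * (p * z) = p * z" by (simp add: mult.assoc[symmetric] 1)
qed

lemma p_decomp: "p + x1 * cadj x1 + x2 * cadj x2 = e" unfolding p_def by simp

end

locale Bw = X: twoiso e x1 x2 + Y: twoiso e y1 y2
  for e x1 x2 y1 y2 :: "'b::cstar_algebra"
begin

definition "Om = y1 * cadj x1 + y2 * cadj x2"
definition "EE = X.p + x1 * X.p * cadj x1"
definition "rr = Y.p + y1 * Y.p * cadj y1 + y2 * x1 * cadj Om * cadj y1 + y2 * x2 * cadj y2"
definition "W = y1 * Om * cadj x1 + y2 * EE + rr * cadj x2"

lemmas defs = Om_def EE_def rr_def W_def X.p_def Y.p_def

lemma W_unitary: "cadj W * W = e" "W * cadj W = e"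
  unfolding defs
  by (simp_all add: cadj_add cadj_mult cadj_cadj algebra_simps mult.assoc)

lemma Wr[simp]: "cadj W * (W * z) = z" "W * (cadj W * z) = z"
  using W_unitary by (simp_all add: mult.assoc[symmetric])

definition "Zc = x2 * cadj W * cadj x2 + e - x2 * cadj x2"
definition "uu = W * Zc"

lemma Zc_unitary: "cadj Zc * Zc = e" "Zc * cadj Zc = e"
  unfolding Zc_def using W_unitary
  by (simp_all add: cadj_add cadj_mult cadj_cadj algebra_simps mult.assoc)

lemma Zcr[simp]: "cadj Zc * (Zc * z) = z" "Zc * (cadj Zc * z) = z"
  using Zc_unitary by (simp_all add: mult.assoc[symmetric])

lemma uu_unitary: "cadj uu * uu = e" "uu * cadj uu = e"
  unfolding uu_def by (simp_all add: cadj_mult mult.assoc Zc_unitary W_unitary)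

lemma W_maps: "W * (x1 * x1) = y1 * y1" "W * (x1 * x2) = y1 * y2"
  unfolding W_def Om_def EE_def rr_def
  by (simp_all add: cadj_add cadj_mult cadj_cadj algebra_simps mult.assoc)

lemma uu_maps: "uu * (x1 * x1) = y1 * y1" "uu * (x1 * x2) = y1 * y2"
  unfolding uu_def Zc_def
  by (simp_all add: algebra_simps mult.assoc W_maps)

end

datatype 'a quad = Q (q11: 'a) (q12: 'a) (q21: 'a) (q22: 'a)

definition m2 :: "'a::cstar_algebra quad \<Rightarrow> 'a quad \<Rightarrow> 'a quad" where
  "m2 X Y = Q (q11 X * q11 Y + q12 X * q21 Y) (q11 X * q12 Y + q12 X * q22 Y)
             (q21 X * q11 Y + q22 X * q21 Y) (q21 X * q12 Y + q22 X * q22 Y)"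

definition ad2 :: "'a::cstar_algebra quad \<Rightarrow> 'a quad" where
  "ad2 X = Q (cadj (q11 X)) (cadj (q21 X)) (cadj (q12 X)) (cadj (q22 X))"

definition one2 :: "'a::cstar_algebra \<Rightarrow> 'a quad" where "one2 e = Q e 0 0 e"

definition unitary2 :: "'a::cstar_algebra \<Rightarrow> 'a quad \<Rightarrow> bool" where
  "unitary2 e X \<longleftrightarrow> m2 (ad2 X) X = one2 e \<and> m2 X (ad2 X) = one2 e"

lemma quad_eq: "X = Y \<longleftrightarrow> q11 X = q11 Y \<and> q12 X = q12 Y \<and> q21 X = q21 Y \<and> q22 X = q22 Y"
  by (cases X; cases Y) auto

lemma m2_assoc: "m2 (m2 X Y) Z = m2 X (m2 Y Z)"
  unfolding m2_def by (simp add: algebra_simps mult.assoc)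

lemma ad2_m2: "ad2 (m2 X Y) = m2 (ad2 Y) (ad2 X)"
  unfolding m2_def ad2_def by (simp add: cadj_add cadj_mult algebra_simps)

lemma ad2_ad2[simp]: "ad2 (ad2 X) = X"
  unfolding ad2_def by (simp add: cadj_cadj quad_eq)

lemma m2_one: "is_unit_elem e \<Longrightarrow> m2 (one2 e) X = X" "is_unit_elem e \<Longrightarrow> m2 X (one2 e) = X"
  unfolding m2_def one2_def by (simp_all add: quad_eq unitL unitR)

lemma unitary2_mult:
  assumes "is_unit_elem e" "unitary2 e X" "unitary2 e Y" shows "unitary2 e (m2 X Y)"
proof -
  have "m2 (ad2 (m2 X Y)) (m2 X Y) = m2 (ad2 Y) (m2 (m2 (ad2 X) X) Y)"
    by (simp add: ad2_m2 m2_assoc)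
  also have "\<dots> = one2 e" using assms unfolding unitary2_def by (simp add: m2_one)
  finally have 1: "m2 (ad2 (m2 X Y)) (m2 X Y) = one2 e" .
  have "m2 (m2 X Y) (ad2 (m2 X Y)) = m2 X (m2 (m2 Y (ad2 Y)) (ad2 X))"
    by (simp add: ad2_m2 m2_assoc)
  also have "\<dots> = one2 e" using assms unfolding unitary2_def by (simp add: m2_one)
  finally show ?thesis using 1 unfolding unitary2_def by simp
qed

lemma unitary2_adj: "unitary2 e X \<Longrightarrow> unitary2 e (ad2 X)"
  unfolding unitary2_def by simp

definition toM :: "'a quad \<Rightarrow> nat \<Rightarrow> nat \<Rightarrow> 'a" where
  "toM X = (\<lambda>i j. if i = 0 then (if j = 0 then q11 X else q12 X) else (if j = 0 then q21 X else q22 X))"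

lemma toM_mult: "matn_mult 2 (toM X) (toM Y) = toM (m2 X Y)"
  unfolding matn_mult_def toM_def m2_def by (auto simp: fun_eq_iff numeral_2_eq_2 lessThan_Suc)

lemma toM_adj: "matn_adj (toM X) = toM (ad2 X)"
  unfolding matn_adj_def toM_def ad2_def by (auto simp: fun_eq_iff)

lemma toM_eq_id: "matn_eq 2 (toM X) (matn_id e) \<longleftrightarrow> X = one2 e"
  unfolding matn_eq_def toM_def matn_id_def one2_def quad_eq
  by (auto simp: numeral_2_eq_2 less_Suc_eq)

lemma toM_eq_diag: "matn_eq 2 (toM X) (diag_one e u) \<longleftrightarrow> X = Q u 0 0 e"
  unfolding matn_eq_def toM_def diag_one_def quad_eq
  by (auto simp: numeral_2_eq_2 less_Suc_eq)

lemma toM_unitary: "matn_unitary e 2 (toM X) \<longleftrightarrow> unitary2 e X"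
  unfolding matn_unitary_def unitary2_def toM_adj toM_mult toM_eq_id by simp

definition Rot :: "'a::cstar_algebra \<Rightarrow> real \<Rightarrow> real \<Rightarrow> 'a \<Rightarrow> 'a quad" where
  "Rot e c s v = Q (e - v * cadj v + scaleR c (v * cadj v)) (- scaleR s v) (scaleR s (cadj v)) (scaleR c e)"

lemma Rot_unitary:
  fixes v e :: "'a::cstar_algebra"
  assumes ue: "is_unit_elem e" and v: "cadj v * v = e" and cs: "c * c + s * s = 1"
  shows "unitary2 e (Rot e c s v)"
proof -
  have ce: "cadj e = e" by (rule unit_cadj[OF ue])
  note u = unitL[OF ue] unitR[OF ue]
  have vr: "cadj v * (v * z) = z" for z using v u by (simp add: mult.assoc[symmetric])
  have ss: "scaleR (s * s) z = z - scaleR (c * c) z" for z :: 'a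
    using cs by (metis add_diff_cancel_left' scaleR_left.diff scaleR_one)
  show ?thesis
    unfolding unitary2_def Rot_def m2_def ad2_def one2_def
    by (simp add: cadj_add cadj_mult cadj_cadj ce u v vr algebra_simps mult.assoc ss)
qed

definition cont4 :: "(real \<Rightarrow> 'a::real_normed_vector quad) \<Rightarrow> bool" where
  "cont4 F \<longleftrightarrow> continuous_on {0..1} (\<lambda>t. q11 (F t)) \<and> continuous_on {0..1} (\<lambda>t. q12 (F t)) \<and>
     continuous_on {0..1} (\<lambda>t. q21 (F t)) \<and> continuous_on {0..1} (\<lambda>t. q22 (F t))"

lemma cont4_const: "cont4 (\<lambda>t. X)" unfolding cont4_def by simp

lemma cont4_m2: "cont4 F \<Longrightarrow> cont4 G \<Longrightarrow> cont4 (\<lambda>t. m2 (F t) (G t))"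
  unfolding cont4_def m2_def by (simp add: continuous_on_add continuous_on_mult)

lemma cont_cadj: "continuous_on S f \<Longrightarrow> continuous_on S (\<lambda>t. cadj (f t :: 'a::cstar_algebra))"
  using bounded_linear.continuous_on[OF bounded_linear_cadj] by blast

lemma cont4_ad2: "cont4 F \<Longrightarrow> cont4 (\<lambda>t. ad2 (F t))"
  unfolding cont4_def ad2_def by (simp add: cont_cadj)

lemma cont4_Rot: "continuous_on {0..1} c \<Longrightarrow> continuous_on {0..1} s \<Longrightarrow> cont4 (\<lambda>t. Rot e (c t) (s t) v)"
  unfolding cont4_def Rot_def
  by (simp add: continuous_on_add continuous_on_diff continuous_on_scaleR continuous_on_minus)

context Bw begin

definition "th t = (1 - t) * (pi / 2)"
definition "GG t = m2 (Rot e (cos (th t)) (sin (th t)) x2) (Rot e (cos (th t)) (sin (th t)) e)"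
definition "DD = Q W 0 0 e"
definition "gam t = m2 (m2 (m2 DD (GG t)) (ad2 DD)) (ad2 (GG t))"

lemma DD_unitary: "unitary2 e DD"
  unfolding unitary2_def DD_def m2_def ad2_def one2_def using W_unitary by simp

lemma GG_unitary: "unitary2 e (GG t)"
  unfolding GG_def
  by (rule unitary2_mult[OF X.ue]; rule Rot_unitary[OF X.ue]) (simp_all add: power2_eq_square[symmetric])

lemma gam_unitary: "unitary2 e (gam t)"
  unfolding gam_def
  by (intro unitary2_mult[OF X.ue] unitary2_adj DD_unitary GG_unitary)

lemma gam1: "gam 1 = one2 e"
proof -
  have "GG 1 = one2 e" unfolding GG_def th_def Rot_def m2_def one2_def by simp
  moreover have "ad2 (one2 e) = one2 e" unfolding ad2_def one2_def by simp
  ultimately show ?thesis unfolding gam_def using DD_unitary by (simp add: m2_one[OF X.ue] unitary2_def)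
qed

lemma gam0: "gam 0 = Q uu 0 0 e"
  unfolding gam_def GG_def th_def Rot_def m2_def DD_def ad2_def uu_def Zc_def
  by (simp add: cadj_add cadj_mult cadj_cadj algebra_simps mult.assoc quad_eq)

lemma gam_cont: "cont4 gam"
proof -
  have c: "continuous_on {0..1} (\<lambda>t. cos (th t))" "continuous_on {0..1} (\<lambda>t. sin (th t))"
    unfolding th_def by (intro continuous_intros)+
  show ?thesis unfolding gam_def GG_def
    by (intro cont4_m2 cont4_ad2 cont4_const cont4_Rot c)
qed

lemma diag_in_U0: "matn_in_U0 e (Suc 1) (diag_one e uu)"
  unfolding matn_in_U0_def
proof (intro exI[of _ "\<lambda>t. toM (gam t)"] conjI)
  show "\<forall>i<Suc 1. \<forall>j<Suc 1. continuous_on {0..1} (\<lambda>t. toM (gam t) i j)"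
    using gam_cont unfolding cont4_def toM_def by (auto simp: less_Suc_eq)
  show "\<forall>t\<in>{0..1}. matn_unitary e (Suc 1) (toM (gam t))"
    using gam_unitary toM_unitary[of e] by (simp add: numeral_2_eq_2)
  show "matn_eq (Suc 1) (toM (gam 0)) (diag_one e uu)"
    using toM_eq_diag gam0 by (metis Suc_1)
  show "matn_eq (Suc 1) (toM (gam 1)) (matn_id e)"
    using toM_eq_id gam1 by (metis Suc_1)
qed

end

context Bw begin

definition "Om2 = y1 * Om * cadj x1 + y2 * Om * cadj x2"
definition "Qx = x1 * x1 * cadj x1 * cadj x1 + x1 * x2 * cadj x2 * cadj x1
   + x2 * x1 * cadj x1 * cadj x2 + x2 * x2 * cadj x2 * cadj x2"
definition "w4 = y1 * Om2 + y2 * (e - Qx)"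

lemma Om2Q: "cadj Om2 * Om2 = Qx"
  unfolding Om2_def Om_def Qx_def
  by (simp add: cadj_add cadj_mult cadj_cadj algebra_simps mult.assoc)

lemma w4_iso: "cadj w4 * w4 = e"
  unfolding w4_def Om2_def Om_def Qx_def
  by (simp add: cadj_add cadj_mult cadj_cadj algebra_simps mult.assoc)

lemma w4_maps: "w4 * (x1 * x1) = y1 * (y1 * y1)" "w4 * (x1 * x2) = y1 * (y1 * y2)"
   "w4 * (x2 * x1) = y1 * (y2 * y1)" "w4 * (x2 * x2) = y1 * (y2 * y2)"
  unfolding w4_def Om2_def Om_def Qx_def
  by (simp_all add: cadj_add cadj_mult cadj_cadj algebra_simps mult.assoc)

lemma w4r[simp]: "cadj w4 * (w4 * z) = z" using w4_iso by (simp add: mult.assoc[symmetric])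

definition "jj = x1 * (e - w4 * cadj w4) * cadj x1 + x1 * w4 * cadj x2 + x2 * cadj w4 * cadj x1 + X.p"
definition "Px = x1 * cadj x1 + x2 * cadj x2"

lemma jj_props: "cadj jj = jj" "jj * jj = e" "jj * x2 = x1 * w4" "Px * jj = jj * Px"
  unfolding jj_def Px_def X.p_def
  by (simp_all add: cadj_add cadj_mult cadj_cadj algebra_simps mult.assoc)

end

lemma pi_from_isos:
  assumes assoc: "\<And>a b c. m (m a b) c = m a (m b c)"
    and adjm: "\<And>a b. ad (m a b) = m (ad b) (ad a)" and adad: "\<And>a. ad (ad a) = a"
    and ul: "\<And>a. m u a = a" and ur: "\<And>a. m a u = a"
    and zl: "\<And>a. m z a = z" and zr: "\<And>a. m a z = z"
    and cm: "\<And>a b. a \<in> S \<Longrightarrow> b \<in> S \<Longrightarrow> m a b \<in> S" and ca: "\<And>a. a \<in> S \<Longrightarrow> ad a \<in> S"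
    and Z: "Z \<in> S" "Z' \<in> S" "m (ad Z) Z = u" "m (ad Z') Z' = u" "m (ad Z) Z' = z"
  shows "properly_infinite S m ad z u"
proof -
  define E where "E = m Z (ad Z)"
  define F where "F = m Z' (ad Z')"
  have pE: "is_proj m ad E" unfolding is_proj_def E_def
    by (simp add: assoc adjm adad) (metis assoc Z(3) ur)
  have pF: "is_proj m ad F" unfolding is_proj_def F_def
    by (simp add: assoc adjm adad) (metis assoc Z(4) ur)
  have EF: "m E F = z" unfolding E_def F_def by (metis assoc Z(5) zl zr)
  have mE: "mvn_equiv S m ad E u" unfolding mvn_equiv_def E_def
    using Z by (intro bexI[of _ "ad Z"]) (auto simp: adad ca)
  have mF: "mvn_equiv S m ad F u" unfolding mvn_equiv_def F_def
    using Z by (intro bexI[of _ "ad Z'"]) (auto simp: adad ca)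
  have "E \<in> S" "F \<in> S" unfolding E_def F_def using Z by (auto intro: cm ca)
  thus ?thesis unfolding properly_infinite_def using pE pF EF mE mF by blast
qed

lemma pi_isos:
  fixes x :: "'a::unital_cstar_algebra"
  assumes "properly_infinite (UNIV::'a set) (*) cadj 0 1"
  shows "\<exists>s1 s2 :: 'a. cadj s1 * s1 = 1 \<and> cadj s2 * s2 = 1 \<and> cadj s1 * s2 = 0"
proof -
  obtain e f v w :: 'a where ef: "e * f = 0" and v: "cadj v * v = e" "v * cadj v = 1"
      and w: "cadj w * w = f" "w * cadj w = 1"
    using assms unfolding properly_infinite_def mvn_equiv_def by blast
  have "v * cadj w = (v * cadj v) * v * cadj w * (w * cadj w)" using v w by simp
  also have "\<dots> = v * (cadj v * v) * (cadj w * w) * cadj w" by (simp add: mult.assoc)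
  also have "\<dots> = 0" using v w ef by (simp add: mult.assoc)
  finally have "v * cadj w = 0" .
  thus ?thesis using v w by (intro exI[of _ "cadj v"] exI[of _ "cadj w"]) (simp add: cadj_cadj)
qed

lemma pb_laws:
  shows "pmult (pmult a b) c = pmult a (pmult b (c::('a1::unital_cstar_algebra \<times> 'a2::unital_cstar_algebra)))"
    "padj (pmult a b) = pmult (padj b) (padj a)" "padj (padj a) = a"
    "pmult (1,1) a = a" "pmult a (1,1) = a" "pmult (0,0) a = (0,0)" "pmult a (0,0) = (0,0)"
  by (simp_all add: pmult_def padj_def mult.assoc cadj_mult cadj_cadj)

lemma mat2_laws:
  fixes M N K :: "bool \<Rightarrow> bool \<Rightarrow> ('a1::unital_cstar_algebra \<times> 'a2::unital_cstar_algebra)"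
  shows "mat2_mult padd pmult (mat2_mult padd pmult M N) K = mat2_mult padd pmult M (mat2_mult padd pmult N K)"
    "mat2_adj padj (mat2_mult padd pmult M N) = mat2_mult padd pmult (mat2_adj padj N) (mat2_adj padj M)"
    "mat2_adj padj (mat2_adj padj M) = M"
    "mat2_mult padd pmult (mat2_one (0,0) (1,1)) M = M" "mat2_mult padd pmult M (mat2_one (0,0) (1,1)) = M"
    "mat2_mult padd pmult (mat2_const (0,0)) M = mat2_const (0,0)"
    "mat2_mult padd pmult M (mat2_const (0,0)) = mat2_const (0,0)"
  by (auto simp: fun_eq_iff mat2_mult_def mat2_adj_def mat2_one_def mat2_const_def padd_def pmult_def padj_def
      algebra_simps mult.assoc cadj_mult cadj_add cadj_cadj)

lemma pb_closed:
  assumes h1: "shom \<pi>1" and h2: "shom \<pi>2"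
  shows "a \<in> pullback \<pi>1 \<pi>2 \<Longrightarrow> b \<in> pullback \<pi>1 \<pi>2 \<Longrightarrow> pmult a b \<in> pullback \<pi>1 \<pi>2"
    "a \<in> pullback \<pi>1 \<pi>2 \<Longrightarrow> b \<in> pullback \<pi>1 \<pi>2 \<Longrightarrow> padd a b \<in> pullback \<pi>1 \<pi>2"
    "a \<in> pullback \<pi>1 \<pi>2 \<Longrightarrow> padj a \<in> pullback \<pi>1 \<pi>2"
  unfolding pullback_def pmult_def padd_def padj_def
  by (auto simp: shom.mult[OF h1] shom.mult[OF h2] shom.add[OF h1] shom.add[OF h2]
      shom.adj[OF h1] shom.adj[OF h2])

lemma mat2_closed:
  assumes h1: "shom \<pi>1" and h2: "shom \<pi>2"
  shows "M \<in> mat2_carrier (pullback \<pi>1 \<pi>2) \<Longrightarrow> N \<in> mat2_carrier (pullback \<pi>1 \<pi>2) \<Longrightarrow>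
      mat2_mult padd pmult M N \<in> mat2_carrier (pullback \<pi>1 \<pi>2)"
    "M \<in> mat2_carrier (pullback \<pi>1 \<pi>2) \<Longrightarrow> mat2_adj padj M \<in> mat2_carrier (pullback \<pi>1 \<pi>2)"
  unfolding mat2_carrier_def mat2_mult_def mat2_adj_def
  by (auto intro!: pb_closed[OF h1 h2])

theorem proposition2p7:
  fixes \<pi>1 :: "'a1::unital_cstar_algebra \<Rightarrow> 'b::cstar_algebra"
    and \<pi>2 :: "'a2::unital_cstar_algebra \<Rightarrow> 'b"
  assumes "properly_infinite (UNIV::'a1 set) (*) cadj 0 1"
    and "properly_infinite (UNIV::'a2 set) (*) cadj 0 1"
    and "star_hom \<pi>1" and "surj \<pi>1"
    and "star_hom \<pi>2" and "surj \<pi>2"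
  shows "properly_infinite (mat2_carrier (pullback \<pi>1 \<pi>2))
           (mat2_mult padd pmult) (mat2_adj padj) (mat2_const (0, 0)) (mat2_one (0, 0) (1, 1))
         \<and> (K1_injective TYPE('b) \<longrightarrow>
              properly_infinite (pullback \<pi>1 \<pi>2) pmult padj (0, 0) (1, 1))"
proof -
  have H1: "shom \<pi>1" using assms(3,4) by unfold_locales
  have H2: "shom \<pi>2" using assms(5,6) by unfold_locales
  interpret h1: shom \<pi>1 by (rule H1)
  interpret h2: shom \<pi>2 by (rule H2)
  obtain s1 s2 :: 'a1 where s: "cadj s1 * s1 = 1" "cadj s2 * s2 = 1" "cadj s1 * s2 = 0"
    using pi_isos[OF assms(1)] by blast
  obtain t1 t2 :: 'a2 where t: "cadj t1 * t1 = 1" "cadj t2 * t2 = 1" "cadj t1 * t2 = 0"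
    using pi_isos[OF assms(2)] by blast
  have s21: "cadj s2 * s1 = 0" using s(3) by (metis cadj_mult cadj_cadj cadj_zero)
  have t21: "cadj t2 * t1 = 0" using t(3) by (metis cadj_mult cadj_cadj cadj_zero)
  define e where "e = \<pi>1 1"
  have ue: "is_unit_elem e" unfolding e_def by (rule h1.unit_img)
  have e2: "\<pi>2 1 = e" using unit_unique[OF h2.unit_img ue] .
  interpret B: Bw e "\<pi>1 s1" "\<pi>1 s2" "\<pi>2 t1" "\<pi>2 t2"
    by unfold_locales (simp_all add: ue e2 h1.unit_img flip: h1.mult h2.mult h1.adj h2.adj add: s t e_def)
  define sb where "sb b = (if b then s2 else s1)" for b :: bool
  define tb where "tb b = (if b then t2 else t1)" for b :: bool
  have sr: "cadj s1 * (s1 * z) = z" "cadj s2 * (s2 * z) = z" "cadj s1 * (s2 * z) = 0" "cadj s2 * (s1 * z) = 0" for z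
    using s s21 by (simp_all add: mult.assoc[symmetric])
  have tr: "cadj t1 * (t1 * z) = z" "cadj t2 * (t2 * z) = z" "cadj t1 * (t2 * z) = 0" "cadj t2 * (t1 * z) = 0" for z
    using t t21 by (simp_all add: mult.assoc[symmetric])
  have sorth: "cadj (sb m * sb l) * (sb m' * sb l') = (if m = m' \<and> l = l' then 1 else 0)" for m l m' l'
    unfolding sb_def using s s21
    by (cases m; cases l; cases m'; cases l') (simp_all add: cadj_mult mult.assoc sr)
  have torth: "cadj (tb m * tb l) * (tb m' * tb l') = (if m = m' \<and> l = l' then 1 else 0)" for m l m' l'
    unfolding tb_def using t t21
    by (cases m; cases l; cases m'; cases l') (simp_all add: cadj_mult mult.assoc tr)
  have t1r: "cadj (t1 * a) * (t1 * b) = cadj a * b" for a b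
    by (simp add: cadj_mult mult.assoc tr)
  have part1: "properly_infinite (mat2_carrier (pullback \<pi>1 \<pi>2))
           (mat2_mult padd pmult) (mat2_adj padj) (mat2_const (0, 0)) (mat2_one (0, 0) (1, 1))"
  proof -
    define P where "P = s1 * cadj s1 + s2 * cadj s2"
    have P: "P * P = P" "cadj P = P" unfolding P_def using s s21
      by (simp_all add: algebra_simps mult.assoc cadj_add cadj_mult cadj_cadj) (simp add: mult.assoc[symmetric])
    have piP: "\<pi>1 P = B.Px" unfolding P_def B.Px_def by simp
    have jj: "cadj B.jj = B.jj" "B.jj * B.jj = \<pi>1 1" "\<pi>1 P * B.jj = B.jj * \<pi>1 P"
      using B.jj_props by (simp_all add: piP e_def)
    obtain V where V: "cadj V * V = 1" "V * cadj V = 1" "V * P = P * V" "\<pi>1 V = B.jj"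
      using h1.lift_sym[OF jj(1,2) P jj(3)] by blast
    define c1 where "c1 = cadj s1 * V * s2"
    define c2 where "c2 = cadj s2 * V * s2"
    have c12: "cadj c1 * c1 + cadj c2 * c2 = 1"
    proof -
      have "cadj c1 * c1 + cadj c2 * c2 = cadj s2 * cadj V * P * V * s2"
        unfolding c1_def c2_def P_def by (simp add: cadj_mult cadj_cadj algebra_simps mult.assoc)
      also have "\<dots> = cadj s2 * (cadj V * V) * (P * s2)"
      proof -
        have "P * (V * s2) = V * (P * s2)" by (metis V(3) mult.assoc)
        thus ?thesis by (simp add: mult.assoc)
      qed
      also have "\<dots> = 1" unfolding P_def using s s21 V by (simp add: algebra_simps mult.assoc)
      finally show ?thesis .
    qed
    have cc: "cadj (c1 * a) * (c1 * b) + cadj (c2 * a) * (c2 * b) = cadj a * b" for a b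
    proof -
      have "cadj (c1 * a) * (c1 * b) + cadj (c2 * a) * (c2 * b) = cadj a * (cadj c1 * c1 + cadj c2 * c2) * b"
        by (simp add: cadj_mult algebra_simps mult.assoc)
      thus ?thesis using c12 by simp
    qed
    have pc1: "\<pi>1 c1 = B.w4" unfolding c1_def using B.jj_props(3) V(4)
      by (simp add: mult.assoc)
    have pc2: "\<pi>1 c2 = 0" unfolding c2_def using B.jj_props(3) V(4)
      by (simp add: mult.assoc)
    define Zm where "Zm m = (\<lambda>i l. if i then (c2 * (sb m * sb l), 0) else (c1 * (sb m * sb l), t1 * (tb m * tb l)))"
      for m :: bool
    have maps: "\<pi>1 (c1 * (sb m * sb l)) = \<pi>2 (t1 * (tb m * tb l))" for m l
      unfolding sb_def tb_def using B.w4_maps by (cases m; cases l) (simp_all add: pc1)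
    have Zc: "Zm m \<in> mat2_carrier (pullback \<pi>1 \<pi>2)" for m
      unfolding mat2_carrier_def pullback_def Zm_def using maps by (auto simp: pc2)
    have ZZ: "mat2_mult padd pmult (mat2_adj padj (Zm m)) (Zm m') =
        (if m = m' then mat2_one (0,0) (1,1) else mat2_const (0,0))" for m m'
      unfolding fun_eq_iff
      by (auto simp: Zm_def mat2_mult_def mat2_adj_def padd_def pmult_def padj_def cc sorth torth t1r
          mat2_one_def mat2_const_def)
    show ?thesis
      by (rule pi_from_isos[where Z="Zm False" and Z'="Zm True"])
        (simp_all add: mat2_laws mat2_closed[OF H1 H2] Zc ZZ)
  qed
  have part2: "properly_infinite (pullback \<pi>1 \<pi>2) pmult padj (0, 0) (1, 1)"
    if K: "K1_injective TYPE('b)"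
  proof -
    obtain e0 :: 'b where e0: "is_unit_elem e0" and
      kprop: "\<And>u. cadj u * u = e0 \<and> u * cadj u = e0 \<longrightarrow> (\<exists>k. matn_in_U0 e0 (Suc k) (diag_one e0 u)) \<longrightarrow>
        matn_in_U0 e0 1 (\<lambda>i j. u)"
      using K unfolding K1_injective_def by blast
    have ee: "e0 = e" using unit_unique[OF e0 ue] .
    have "matn_in_U0 e 1 (\<lambda>i j. B.uu)" using kprop[of B.uu] B.uu_unitary B.diag_in_U0 ee by blast
    then obtain \<gamma> :: "real \<Rightarrow> nat \<Rightarrow> nat \<Rightarrow> 'b" where g:
      "continuous_on {0..1} (\<lambda>t. \<gamma> t 0 0)" "\<forall>t\<in>{0..1}. matn_unitary e 1 (\<gamma> t)"
      "matn_eq 1 (\<gamma> 0) (\<lambda>i j. B.uu)" "matn_eq 1 (\<gamma> 1) (matn_id e)"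
      unfolding matn_in_U0_def by auto
    have un: "cadj (\<gamma> t 0 0) * \<gamma> t 0 0 = \<pi>1 1 \<and> \<gamma> t 0 0 * cadj (\<gamma> t 0 0) = \<pi>1 1" if "t \<in> {0..1}" for t
      using g(2) that unfolding matn_unitary_def matn_eq_def matn_mult_def matn_adj_def matn_id_def
      by (simp add: e_def)
    have g1: "\<gamma> 1 0 0 = \<pi>1 1" using g(4) unfolding matn_eq_def matn_id_def e_def by auto
    have "h1.liftable (\<gamma> 0 0 0)"
      by (rule h1.path_lift[OF g(1) un g1])
    moreover have "\<gamma> 0 0 0 = B.uu" using g(3) by (simp add: matn_eq_def)
    ultimately obtain V where V: "cadj V * V = 1" "V * cadj V = 1" "\<pi>1 V = B.uu"
      unfolding h1.liftable_def by auto
    define Z where "Z l = (V * (s1 * sb l), t1 * tb l)" for l :: bool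
    have Zp: "Z l \<in> pullback \<pi>1 \<pi>2" for l
      unfolding pullback_def Z_def sb_def tb_def using B.uu_maps V(3) by (cases l) (simp_all add: mult.assoc)
    have ZZ: "pmult (padj (Z l)) (Z l') = (if l = l' then (1,1) else (0,0))" for l l'
    proof -
      have "cadj (V * (s1 * sb l)) * (V * (s1 * sb l')) = cadj (s1 * sb l) * (s1 * sb l')"
        using V by (simp add: cadj_mult mult.assoc) (simp add: mult.assoc[symmetric])
      moreover have "cadj (s1 * sb l) * (s1 * sb l') = (if l = l' then 1 else 0)"
        using sorth[of False l False l'] by (simp add: sb_def)
      moreover have "cadj (t1 * tb l) * (t1 * tb l') = (if l = l' then 1 else 0)"
        using torth[of False l False l'] by (simp add: tb_def)
      ultimately show ?thesis unfolding Z_def pmult_def padj_def by auto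
    qed
    show ?thesis
      by (rule pi_from_isos[where Z="Z False" and Z'="Z True"])
        (simp_all add: pb_laws pb_closed[OF H1 H2] Zp ZZ)
  qed
  show ?thesis using part1 part2 by blast
qed


end
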